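(* Let $(\mathbb{Z},H^+)$ be a simple component with $N_H$ the unique element of $H^+$ such that $N_H-1\notin H^+$ and $N_H+k\in H^+$ for all $k\in\mathbb{Z}^+$. Let $a\in\mathbb{N}$ and $p,c,d\in\mathbb{N}$ with $\gcd(a,p)=\gcd(a,c)=\gcd(c,d)=1$, $pc\equiv pd\equiv1\pmod a$, $p\in H^+$, $pc>aN_H$, $d>\max\{(a-1)pc+a(N_H-1),ac\}$, and let $G^+=aH^++p\langle c,d\rangle$, so that $(\mathbb{Z},G^+)$ is a simple component. Let $N_G$ be the unique element of $G^+$ with $N_G-1\notin G^+$ and $N_G+k\in G^+$ for all $k\in\mathbb{Z}^+$. Then $N_G=(a-1)pc+a(N_H-1)+1$.
   Context: A simple component is a simple partially ordered abelian group $(\mathbb{Z},P)$ (every nonzero element of $P$ is an order-unit). $\langle c,d\rangle$ is the submonoid of $\mathbb{Z}^+$ generated by $c,d$, and $aH^++p\langle c,d\rangle=\{ah+pz: h\in H^+, z\in\langle c,d\rangle\}$. *)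

theory Defs
  imports Main
begin

text \<open>A partially ordered abelian group structure on the integers is given by its
positive cone P: 0 in P, P + P contained in P, and P intersect -P = {0}.\<close>
definition po_cone :: "int set \<Rightarrow> bool" where
  "po_cone P \<longleftrightarrow> 0 \<in> P \<and> (\<forall>x\<in>P. \<forall>y\<in>P. x + y \<in> P) \<and> (\<forall>x. x \<in> P \<and> - x \<in> P \<longrightarrow> x = 0)"

definition order_unit :: "int set \<Rightarrow> int \<Rightarrow> bool" where
  "order_unit P u \<longleftrightarrow> u \<in> P \<and> (\<forall>x::int. \<exists>n::nat. int n * u - x \<in> P)"

definition simple_component :: "int set \<Rightarrow> bool" where
  "simple_component P \<longleftrightarrow> po_cone P \<and> (\<forall>u\<in>P. u \<noteq> 0 \<longrightarrow> order_unit P u)"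

text \<open>Z^+ = nonnegative integers; the submonoid of Z^+ generated by c and d.\<close>
definition gen2 :: "int \<Rightarrow> int \<Rightarrow> int set" where
  "gen2 c d = {int m * c + int n * d | m n. True}"

definition combo :: "int \<Rightarrow> int set \<Rightarrow> int \<Rightarrow> int \<Rightarrow> int \<Rightarrow> int set" where
  "combo a H p c d = {a * h + p * z | h z. h \<in> H \<and> z \<in> gen2 c d}"

definition is_conductor :: "int set \<Rightarrow> int \<Rightarrow> bool" where
  "is_conductor P N \<longleftrightarrow> N \<in> P \<and> N - 1 \<notin> P \<and> (\<forall>k::int. k \<ge> 0 \<longrightarrow> N + k \<in> P)"

end

theory Submission
  imports Defs
begin

lemma sc_lemma:
  fixes P :: "int set" and N :: int
  assumes "0 \<in> P" "\<forall>x\<in>P. \<forall>y\<in>P. x + y \<in> P" "\<forall>x\<in>P. x \<ge> 0" "\<forall>n\<ge>N. n \<in> P"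
  shows "simple_component P"
  unfolding simple_component_def po_cone_def
proof (intro conjI ballI impI allI)
  show "0 \<in> P" by fact
  show "\<And>x y. x \<in> P \<Longrightarrow> y \<in> P \<Longrightarrow> x + y \<in> P" using assms(2) by blast
  show "\<And>x. x \<in> P \<and> - x \<in> P \<Longrightarrow> x = 0"
  proof -
    fix x assume "x \<in> P \<and> - x \<in> P"
    hence "x \<ge> 0" "- x \<ge> 0" using assms(3) by auto
    thus "x = 0" by simp
  qed
  fix u assume u: "u \<in> P" "u \<noteq> 0"
  hence u1: "u \<ge> 1" using assms(3) by force
  show "order_unit P u" unfolding order_unit_def
  proof (intro conjI allI)
    show "u \<in> P" by fact
    fix x :: int
    define n where "n = nat (\<bar>x\<bar> + \<bar>N\<bar>)"
    have "int n * u \<ge> int n * 1" using u1 by (intro mult_left_mono) auto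
    hence "int n * u - x \<ge> N" unfolding n_def by auto
    thus "\<exists>n. int n * u - x \<in> P" using assms(4) by blast
  qed
qed

lemma H_nonneg:
  fixes H :: "int set"
  assumes "simple_component H" "is_conductor H NH" "x \<in> H"
  shows "x \<ge> 0"
proof (rule ccontr)
  assume neg: "\<not> x \<ge> 0"
  have pc: "po_cone H" using assms(1) simple_component_def by blast
  have mult: "int n * x \<in> H" for n
  proof (induction n)
    case 0 then show ?case using pc po_cone_def by auto
  next
    case (Suc n)
    have "int (Suc n) * x = int n * x + x" by (simp add: algebra_simps)
    then show ?case using Suc pc assms(3) unfolding po_cone_def by metis
  qed
  define n where "n = nat \<bar>NH\<bar> + 1"
  have "int n * x \<le> - int n" 
  proof -
    have "int n * x \<le> int n * (-1)" using neg by (intro mult_left_mono) auto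
    thus ?thesis by simp
  qed
  hence "- (int n * x) \<ge> NH" unfolding n_def by auto
  hence "- (int n * x) \<in> H" using assms(2) unfolding is_conductor_def
    by (metis add.commute diff_add_cancel diff_ge_0_iff_ge)
  hence "int n * x = 0" using mult pc unfolding po_cone_def by blast
  thus False using \<open>int n * x \<le> - int n\<close> n_def by auto
qed

theorem corollary4p4:
  fixes H :: "int set" and NH a p c d :: int
  assumes "simple_component H"
    and "is_conductor H NH"
    and "a \<ge> 0" and "p \<ge> 0" and "c \<ge> 0" and "d \<ge> 0"
    and "gcd a p = 1" and "gcd a c = 1" and "gcd c d = 1"
    and "(p * c) mod a = 1 mod a" and "(p * d) mod a = 1 mod a"
    and "p \<in> H"
    and "p * c > a * NH"
    and "d > max ((a - 1) * p * c + a * (NH - 1)) (a * c)"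
  shows "simple_component (combo a H p c d)
         \<and> (\<forall>NG. is_conductor (combo a H p c d) NG \<longrightarrow> NG = (a - 1) * p * c + a * (NH - 1) + 1)"
proof -
  define G where "G = combo a H p c d"
  define F where "F = (a - 1) * p * c + a * (NH - 1)"
  have pc: "po_cone H" using assms(1) simple_component_def by blast
  have H0: "0 \<in> H" and Hadd: "\<And>x y. x \<in> H \<Longrightarrow> y \<in> H \<Longrightarrow> x + y \<in> H"
    using pc unfolding po_cone_def by auto
  have Hnn: "\<And>x. x \<in> H \<Longrightarrow> x \<ge> 0" using H_nonneg assms(1,2) by blast
  have NHin: "NH \<in> H" and NH1: "NH - 1 \<notin> H" and Hbig: "\<And>x. x \<ge> NH \<Longrightarrow> x \<in> H"
    using assms(2) unfolding is_conductor_def by (auto, metis add.commute diff_add_cancel diff_ge_0_iff_ge)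
  have NH0: "NH \<ge> 0" using Hnn NHin by blast
  have p1: "p \<ge> 1"
  proof (rule ccontr)
    assume "\<not> p \<ge> 1" hence "p = 0" using assms(4) by auto
    hence "a * NH < 0" using assms(13) by simp
    thus False using assms(3) NH0 by (simp add: mult_less_0_iff)
  qed
  have c1: "c \<ge> 1"
  proof (rule ccontr)
    assume "\<not> c \<ge> 1" hence "c = 0" using assms(5) by auto
    hence "a * NH < 0" using assms(13) by simp
    thus False using assms(3) NH0 by (simp add: mult_less_0_iff)
  qed
  have gen_nn: "z \<ge> 0" if "z \<in> gen2 c d" for z
    using that assms(5,6) unfolding gen2_def by auto
  have gen_add: "z1 + z2 \<in> gen2 c d" if zz: "z1 \<in> gen2 c d" "z2 \<in> gen2 c d" for z1 z2
  proof -
    obtain m1 n1 where "z1 = int m1 * c + int n1 * d" using zz(1) unfolding gen2_def by blast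
    moreover obtain m2 n2 where "z2 = int m2 * c + int n2 * d" using zz(2) unfolding gen2_def by blast
    ultimately have "z1 + z2 = int (m1 + m2) * c + int (n1 + n2) * d" by (simp add: algebra_simps)
    thus ?thesis unfolding gen2_def by blast
  qed
  have G0: "0 \<in> G" unfolding G_def combo_def gen2_def
    by (rule CollectI, rule exI[of _ 0], rule exI[of _ 0]) (use H0 in \<open>auto intro!: exI[of _ 0]\<close>)
  have Gadd: "\<forall>x\<in>G. \<forall>y\<in>G. x + y \<in> G"
  proof (intro ballI)
    fix x y assume "x \<in> G" "y \<in> G"
    then obtain h1 z1 h2 z2 where "x = a * h1 + p * z1" "h1 \<in> H" "z1 \<in> gen2 c d"
      "y = a * h2 + p * z2" "h2 \<in> H" "z2 \<in> gen2 c d" unfolding G_def combo_def by auto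
    moreover have "x + y = a * (h1 + h2) + p * (z1 + z2)" using calculation by (simp add: algebra_simps)
    ultimately show "x + y \<in> G" unfolding G_def combo_def using Hadd gen_add by blast
  qed
  have Gnn: "\<forall>x\<in>G. x \<ge> 0"
  proof
    fix x assume "x \<in> G"
    then obtain h z where "x = a * h + p * z" "h \<in> H" "z \<in> gen2 c d" unfolding G_def combo_def by auto
    thus "x \<ge> 0" using Hnn gen_nn assms(3,4) by auto
  qed
  have Gall: "\<forall>n\<ge>F+1. n \<in> G"
  proof (intro allI impI)
    fix n assume n: "n \<ge> F + 1"
    show "n \<in> G"
    proof (cases "a = 0")
      case True
      hence "p * c = 1" using assms(10) by simp
      hence F: "F = -1" unfolding F_def using True by (simp add: algebra_simps)
      have "n = a * 0 + p * (int (nat n) * c + int 0 * d)" using True n F \<open>p * c = 1\<close>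
        by (simp add: algebra_simps)
      thus ?thesis unfolding G_def combo_def gen2_def using H0 by blast
    next
      case False
      hence a1: "a \<ge> 1" using assms(3) by auto
      define m where "m = n mod a"
      have m: "0 \<le> m" "m \<le> a - 1" unfolding m_def using a1 by auto
      have "(m * (p * c)) mod a = (m * ((p * c) mod a)) mod a" by (simp add: mod_mult_right_eq)
      also have "\<dots> = m mod a" using assms(10) by (simp add: mod_mult_right_eq)
      also have "\<dots> = n mod a" unfolding m_def by simp
      finally have "a dvd (n - m * (p * c))" by (metis mod_eq_dvd_iff)
      then obtain h where h: "n - m * (p * c) = a * h" by (auto elim: dvdE)
      have "m * (p * c) \<le> (a - 1) * (p * c)" using m p1 c1 by (intro mult_right_mono) auto
      hence "a * h > a * (NH - 1)" using h n unfolding F_def by (simp add: algebra_simps)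
      hence "h > NH - 1" using a1 by (simp add: mult_less_cancel_left)
      hence hH: "h \<in> H" using Hbig by auto
      have "n = a * h + p * (int (nat m) * c + int 0 * d)" using h m by (simp add: algebra_simps)
      thus ?thesis unfolding G_def combo_def gen2_def using hH by blast
    qed
  qed
  have Gnot: "F \<notin> G"
  proof
    assume "F \<in> G"
    then obtain h z where hz: "F = a * h + p * z" "h \<in> H" "z \<in> gen2 c d" unfolding G_def combo_def by auto
    then obtain i j where z: "z = int i * c + int j * d" unfolding gen2_def by auto
    have h0: "h \<ge> 0" using Hnn hz by auto
    have ah: "a * h \<ge> 0" using h0 assms(3) by auto
    show False
    proof (cases "a = 0")
      case True
      hence "p * c = 1" using assms(10) by simp
      hence "F = -1" unfolding F_def using True by (simp add: algebra_simps)
      thus False using \<open>F \<in> G\<close> Gnn by auto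
    next
      case False
      hence a1: "a \<ge> 1" using assms(3) by auto
      show False
      proof (cases "j = 0")
        case False
        have "int j * d \<ge> 1 * d" using False assms(6) by (intro mult_right_mono) auto
        moreover have "int i * c \<ge> 0" using assms(5) by auto
        ultimately have "z \<ge> d" using z by auto
        moreover have "p * z \<ge> 1 * z" using p1 calculation assms(6) by (intro mult_right_mono) auto
        ultimately have "F \<ge> d" using hz ah by auto
        thus False using assms(14) unfolding F_def by auto
      next
        case True
        hence eq: "F = a * h + int i * (p * c)" using hz z by (simp add: algebra_simps)
        consider "int i = a - 1" | "int i \<ge> a" | "int i < a - 1" by linarith
        then show False
        proof cases
          case 1
          hence "int i * (p * c) = (a - 1) * p * c" by simp
          hence "a * h = a * (NH - 1)" using eq unfolding F_def by linarith
          hence "h = NH - 1" using a1 by simp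
          thus False using NH1 hz by auto
        next
          case 2
          have "int i * (p * c) \<ge> a * (p * c)" using 2 p1 c1 by (intro mult_right_mono) auto
          hence "a * h \<le> a * (NH - 1) - p * c" using eq unfolding F_def by (simp add: algebra_simps)
          moreover have "a * (NH - 1) \<le> a * NH" using assms(3) by (intro mult_left_mono) auto
          ultimately show False using ah assms(13) by linarith
        next
          case 3
          have "a * (h - (NH - 1)) = (a - 1 - int i) * (p * c)" using eq unfolding F_def
            by (simp add: algebra_simps)
          hence "a dvd (a - 1 - int i) * (p * c)" by (metis dvd_triv_left)
          moreover have "coprime a (p * c)" using assms(7,8)
            by (metis coprime_iff_gcd_eq_1 coprime_mult_right_iff)
          ultimately have "a dvd (a - 1 - int i)" using coprime_dvd_mult_left_iff by blast
          moreover have "a - 1 - int i > 0" using 3 by auto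
          ultimately have "a \<le> a - 1 - int i" using zdvd_imp_le by blast
          thus False by auto
        qed
      qed
    qed
  qed
  have "simple_component G"
    using sc_lemma[OF G0 Gadd Gnn, of "F+1"] Gall by blast
  moreover have "\<forall>NG. is_conductor G NG \<longrightarrow> NG = F + 1"
  proof (intro allI impI)
    fix NG assume "is_conductor G NG"
    hence c: "NG \<in> G" "NG - 1 \<notin> G" "\<forall>k\<ge>0. NG + k \<in> G" unfolding is_conductor_def by auto
    have "\<not> NG \<le> F" using c(3) Gnot by (metis add.commute diff_add_cancel diff_ge_0_iff_ge)
    moreover have "\<not> NG \<ge> F + 2" using c(2) Gall by auto
    ultimately show "NG = F + 1" by auto
  qed
  ultimately show ?thesis unfolding G_def F_def by blast
qed

end
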